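(* Let $P\in\mathbb{R}^{n_x\times n_x}$ and $R\in\mathbb{R}^{n_z\times n_z}$ be symmetric positive definite, let $H\in\mathbb{R}^{n_z\times n_x}$ have full row rank, and let $\bar x\in\mathbb{R}^{n_x}$, $z\in\mathbb{R}^{n_z}$. Let $x_0$ be a random vector in $\mathbb{R}^{n_x}$ with $\mathbb{E}[x_0]=\bar x$ and $\mathrm{Cov}(x_0)=P$. Define the closed-form update $$x_1=\Phi\,x_0+E\,c,\qquad \Phi=I+E\,\Omega\,F^\top,$$ with $E,F,\Omega,c$ as in the context. Then $$\mathbb{E}[x_1]=\bar x+PH^\top(HPH^\top+R)^{-1}(z-H\bar x),\qquad \mathrm{Cov}(x_1)=\Phi P\Phi^\top=P-PH^\top(HPH^\top+R)^{-1}HP,$$ i.e. the update reproduces the Kalman posterior mean and covariance.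
   Context: $R^{-1/2}$ denotes the inverse of the unique symmetric positive definite square root of $R$. Let $D=R^{-1/2}HPH^\top R^{-1/2}\in\mathbb{R}^{n_z\times n_z}$ (symmetric positive definite), with eigendecomposition $D=V\Lambda V^\top$, $V$ orthogonal, $\Lambda=\mathrm{diag}(\alpha_1,\dots,\alpha_{n_z})$, $\alpha_i>0$. Define $E=PH^\top R^{-1/2}V\in\mathbb{R}^{n_x\times n_z}$, $F^\top=V^\top R^{-1/2}H\in\mathbb{R}^{n_z\times n_x}$, $\tilde z=V^\top R^{-1/2}z$, $\tilde x=F^\top\bar x$. Let $\Omega=\mathrm{diag}(\omega_1,\dots,\omega_{n_z})$ with $\omega_i=\big((1+\alpha_i)^{-1/2}-1\big)/\alpha_i$, and $c\in\mathbb{R}^{n_z}$ with $c_i=\dfrac{\alpha_i\tilde z_i+\tilde x_i(1-\sqrt{1+\alpha_i})}{\alpha_i(1+\alpha_i)}$. *)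

theory Defs
  imports "HOL-Analysis.Analysis" "HOL-Probability.Probability"
begin

definition pos_def_matrix :: "real^'n^'n \<Rightarrow> bool" where
  "pos_def_matrix A \<longleftrightarrow> transpose A = A \<and> (\<forall>x. x \<noteq> 0 \<longrightarrow> x \<bullet> (A *v x) > 0)"

definition matrix_sqrt :: "real^'n^'n \<Rightarrow> real^'n^'n" where
  "matrix_sqrt A = (THE S. pos_def_matrix S \<and> S ** S = A)"

definition diag_mat :: "real^'n \<Rightarrow> real^'n^'n" where
  "diag_mat a = (\<chi> i j. if i = j then a $ i else 0)"

definition mean_vec :: "'a measure \<Rightarrow> ('a \<Rightarrow> real^'n) \<Rightarrow> real^'n" where
  "mean_vec M X = integral\<^sup>L M X"

definition cov_mat :: "'a measure \<Rightarrow> ('a \<Rightarrow> real^'n) \<Rightarrow> real^'n^'n" where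
  "cov_mat M X = (\<chi> i j. integral\<^sup>L M
      (\<lambda>w. (X w $ i - mean_vec M X $ i) * (X w $ j - mean_vec M X $ j)))"

definition Rih :: "real^'z^'z \<Rightarrow> real^'z^'z" where
  "Rih R = matrix_inv (matrix_sqrt R)"

definition upd_E :: "real^'x^'x \<Rightarrow> real^'z^'z \<Rightarrow> real^'x^'z \<Rightarrow> real^'z^'z \<Rightarrow> real^'z^'x" where
  "upd_E P R H V = P ** transpose H ** Rih R ** V"

definition upd_Ft :: "real^'z^'z \<Rightarrow> real^'x^'z \<Rightarrow> real^'z^'z \<Rightarrow> real^'x^'z" where
  "upd_Ft R H V = transpose V ** Rih R ** H"

definition upd_Omega :: "real^'z \<Rightarrow> real^'z^'z" where
  "upd_Omega \<alpha> = diag_mat (\<chi> i. (1 / sqrt (1 + \<alpha> $ i) - 1) / \<alpha> $ i)"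

definition upd_c :: "real^'z^'z \<Rightarrow> real^'x^'z \<Rightarrow> real^'z^'z \<Rightarrow> real^'z \<Rightarrow> real^'x \<Rightarrow> real^'z \<Rightarrow> real^'z" where
  "upd_c R H V \<alpha> xbar z =
     (let zt = transpose V *v (Rih R *v z); xt = upd_Ft R H V *v xbar in
      (\<chi> i. (\<alpha> $ i * zt $ i + xt $ i * (1 - sqrt (1 + \<alpha> $ i))) / (\<alpha> $ i * (1 + \<alpha> $ i))))"

definition upd_Phi :: "real^'x^'x \<Rightarrow> real^'z^'z \<Rightarrow> real^'x^'z \<Rightarrow> real^'z^'z \<Rightarrow> real^'z \<Rightarrow> real^'x^'x" where
  "upd_Phi P R H V \<alpha> = mat 1 + upd_E P R H V ** upd_Omega \<alpha> ** upd_Ft R H V"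

end

theory Submission
  imports Defs
begin

lemma sym_inner:
  fixes A :: "real^'n^'n"
  assumes "transpose A = A"
  shows "x \<bullet> (A *v y) = (A *v x) \<bullet> y"
by (metis assms dot_lmul_matrix vector_transpose_matrix)

lemma eig_in_subspace:
  fixes A :: "real^'n^'n"
  assumes sym: "transpose A = A" and W: "subspace W" and x0: "x0 \<in> W" "x0 \<noteq> 0"
    and inv: "\<And>x. x \<in> W \<Longrightarrow> A *v x \<in> W"
  shows "\<exists>v l. v \<in> W \<and> norm v = 1 \<and> A *v v = l *\<^sub>R v"
proof -
  let ?K = "W \<inter> sphere 0 1"
  let ?f = "\<lambda>x. x \<bullet> (A *v x)"
  have "compact ?K"
    by (rule closed_Int_compact[OF closed_subspace[OF W] compact_sphere])
  moreover have "?K \<noteq> {}"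
  proof -
    have "x0 /\<^sub>R norm x0 \<in> ?K" using x0 W by (simp add: subspace_scale)
    then show ?thesis by blast
  qed
  moreover have "continuous_on ?K ?f"
    by (intro continuous_on_inner continuous_on_id linear_continuous_on matrix_vector_mul_bounded_linear)
  ultimately have "\<exists>v\<in>?K. \<forall>y\<in>?K. ?f y \<le> ?f v" by (rule continuous_attains_sup)
  then obtain v where v: "v \<in> ?K" and vmax: "\<And>y. y \<in> ?K \<Longrightarrow> ?f y \<le> ?f v"
    by blast
  define l where "l = ?f v"
  have g: "0 \<le> l * (y \<bullet> y) - y \<bullet> (A *v y)" if "y \<in> W" for y
  proof (cases "y = 0")
    case True then show ?thesis by simp
  next
    case False
    let ?y = "y /\<^sub>R norm y"
    have "?y \<in> ?K" using that W False by (simp add: subspace_scale)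
    then have "?f ?y \<le> l" unfolding l_def by (rule vmax)
    moreover have "?f ?y = ?f y / (norm y)^2"
      using False by (simp add: matrix_vector_mult_scaleR power2_eq_square field_simps)
    moreover have "y \<bullet> y = (norm y)^2" by (simp add: power2_norm_eq_inner)
    ultimately show ?thesis using False
      by (simp add: divide_le_eq)
  qed
  define u where "u = l *\<^sub>R v - A *v v"
  have uW: "u \<in> W" using v W inv unfolding u_def by (simp add: subspace_diff subspace_scale)
  have vv: "v \<bullet> v = 1" using v by (simp add: norm_eq_1)
  have key: "0 \<le> 2 * t * (u \<bullet> u) + t^2 * (l * (u \<bullet> u) - u \<bullet> (A *v u))" for t
  proof -
    have "v + t *\<^sub>R u \<in> W" using v uW W by (simp add: subspace_add subspace_scale)
    then have "0 \<le> l * ((v + t *\<^sub>R u) \<bullet> (v + t *\<^sub>R u)) - (v + t *\<^sub>R u) \<bullet> (A *v (v + t *\<^sub>R u))"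
      by (rule g)
    also have "\<dots> = (l * (v \<bullet> v) - v \<bullet> (A *v v)) + 2 * t * (l * (u \<bullet> v) - u \<bullet> (A *v v))
        + t^2 * (l * (u \<bullet> u) - u \<bullet> (A *v u))"
      using sym_inner[OF sym, of v u]
      by (simp add: matrix_vector_right_distrib matrix_vector_mult_scaleR inner_add_left inner_add_right
          inner_commute[of v u] inner_commute[of "A *v v" u] algebra_simps power2_eq_square)
    also have "l * (u \<bullet> v) - u \<bullet> (A *v v) = u \<bullet> u"
      unfolding u_def by (simp add: inner_diff_right)
    finally show ?thesis using vv l_def by simp
  qed
  have "u \<bullet> u = 0"
  proof (rule ccontr)
    assume ne: "u \<bullet> u \<noteq> 0"
    define a where "a = u \<bullet> u"
    define b where "b = l * (u \<bullet> u) - u \<bullet> (A *v u)"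
    have a: "a > 0" using ne a_def by (simp add: order_less_le)
    have b: "b \<ge> 0" using g[OF uW] b_def by simp
    define t where "t = - a / (b + 1)"
    have tb: "t * (b + 1) = - a" using b by (simp add: t_def)
    have "0 \<le> 2 * t * a + t^2 * b" using key[of t] a_def b_def by simp
    then have nn: "0 \<le> (b + 1)^2 * (2 * t * a + t^2 * b)" by simp
    have "(b + 1)^2 * (2 * t * a + t^2 * b) = 2 * a * (b + 1) * (t * (b + 1)) + (t * (b + 1))^2 * b"
      by (simp add: algebra_simps power2_eq_square)
    also have "\<dots> = - (a^2 * (b + 2))" unfolding tb by (simp add: algebra_simps power2_eq_square)
    finally have "(b + 1)^2 * (2 * t * a + t^2 * b) = - (a^2 * (b + 2))" .
    moreover have "a^2 * (b + 2) > 0" using a b by simp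
    ultimately show False using nn by linarith
  qed
  then have "A *v v = l *\<^sub>R v" unfolding u_def by simp
  then show ?thesis using v by auto
qed

definition good_set :: "real^'n^'n \<Rightarrow> (real^'n) set \<Rightarrow> bool" where
  "good_set A S \<longleftrightarrow> (\<forall>v\<in>S. norm v = 1 \<and> (\<exists>c. A *v v = c *\<^sub>R v)) \<and> pairwise orthogonal S"

lemma good_setD:
  assumes "good_set A S" "v \<in> S"
  obtains c where "A *v v = c *\<^sub>R v" "norm v = 1"
proof -
  have "norm v = 1 \<and> (\<exists>c. A *v v = c *\<^sub>R v)" using assms by (simp add: good_set_def)
  then show ?thesis using that by metis
qed

lemma good_set_indep: "good_set A S \<Longrightarrow> independent S"
  unfolding good_set_def
  by (metis norm_zero pairwise_orthogonal_independent zero_neq_one)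

lemma good_set_card: "good_set A S \<Longrightarrow> finite S \<and> card S < Suc CARD('n)"
  for A :: "real^'n^'n"
  using independent_bound[OF good_set_indep] by (simp add: less_Suc_eq_le)

lemma eig_basis:
  fixes A :: "real^'n^'n"
  assumes sym: "transpose A = A"
  shows "\<exists>B. good_set A B \<and> finite B \<and> span B = UNIV"
proof -
  have "good_set A {}" by (simp add: good_set_def)
  then obtain S where S: "good_set A S" and Smax: "\<And>T. good_set A T \<Longrightarrow> card T \<le> card S"
    using ex_has_greatest_nat[where P="good_set A" and f=card and b="Suc CARD('n)"] good_set_card
    by metis
  have fin: "finite S" using good_set_card[OF S] by simp
  have "span S = UNIV"
  proof (rule ccontr)
    assume ne: "span S \<noteq> UNIV"
    obtain a where a: "a \<noteq> 0" "\<forall>x\<in>span S. a \<bullet> x = 0"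
      using span_not_UNIV_orthogonal[OF ne] by blast
    let ?W = "{y. \<forall>x\<in>S. orthogonal x y}"
    have aW: "a \<in> ?W" using a span_base by (auto simp: orthogonal_def inner_commute)
    have inv: "A *v y \<in> ?W" if "y \<in> ?W" for y
    proof -
      have "orthogonal x (A *v y)" if "x \<in> S" for x
      proof -
        obtain c where c: "A *v x = c *\<^sub>R x" using good_setD[OF S \<open>x \<in> S\<close>] by metis
        have "x \<bullet> (A *v y) = (A *v x) \<bullet> y" by (rule sym_inner[OF sym])
        also have "\<dots> = c * (x \<bullet> y)" using c by simp
        also have "x \<bullet> y = 0" using \<open>y \<in> ?W\<close> \<open>x \<in> S\<close> by (simp add: orthogonal_def)
        finally show ?thesis by (simp add: orthogonal_def)
      qed
      then show ?thesis by simp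
    qed
    obtain v l where v: "v \<in> ?W" "norm v = 1" "A *v v = l *\<^sub>R v"
      using eig_in_subspace[OF sym subspace_orthogonal_to_vectors aW a(1) inv] by blast
    have vS: "v \<notin> S"
    proof
      assume "v \<in> S"
      then have "orthogonal v v" using v(1) by simp
      then show False using v(2) by (simp add: orthogonal_self)
    qed
    have "good_set A (insert v S)"
      using S v unfolding good_set_def pairwise_insert
      by (auto simp: orthogonal_commute)
    then have "card (insert v S) \<le> card S" by (rule Smax)
    then show False using vS fin by simp
  qed
  then show ?thesis using S fin by blast
qed

lemma good_expand:
  assumes "good_set A B" "finite B" "span B = UNIV"
  shows "x = (\<Sum>v\<in>B. (v \<bullet> x) *\<^sub>R v)"
proof -
  have on: "v \<bullet> w = (if v = w then 1 else 0)" if "v \<in> B" "w \<in> B" for v w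
    using assms(1) that unfolding good_set_def pairwise_def orthogonal_def
    by (auto simp: norm_eq_1)
  define y where "y = x - (\<Sum>v\<in>B. (v \<bullet> x) *\<^sub>R v)"
  have "w \<bullet> y = 0" if "w \<in> B" for w
  proof -
    have "w \<bullet> (\<Sum>v\<in>B. (v \<bullet> x) *\<^sub>R v) = (\<Sum>v\<in>B. (v \<bullet> x) * (w \<bullet> v))"
      by (simp add: inner_sum_right)
    also have "\<dots> = (\<Sum>v\<in>B. if v = w then v \<bullet> x else 0)"
      by (rule sum.cong) (use on that in auto)
    also have "\<dots> = w \<bullet> x" using that assms(2) by (simp add: sum.delta')
    finally show ?thesis unfolding y_def by (simp add: inner_diff_right)
  qed
  then have "orthogonal y a" for a
    using orthogonal_to_span[of a B y] assms(3) by (auto simp: orthogonal_def inner_commute)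
  then have "y = 0" using orthogonal_self by blast
  then show ?thesis unfolding y_def by simp
qed

lemma good_coeff:
  assumes "good_set A B" "finite B" "w \<in> B"
  shows "w \<bullet> (\<Sum>v\<in>B. c v *\<^sub>R v) = c w"
proof -
  have on: "v \<bullet> w = (if v = w then 1 else 0)" if "v \<in> B" "w \<in> B" for v w
    using assms(1) that unfolding good_set_def pairwise_def orthogonal_def
    by (auto simp: norm_eq_1)
  have "w \<bullet> (\<Sum>v\<in>B. c v *\<^sub>R v) = (\<Sum>v\<in>B. c v * (w \<bullet> v))"
    by (simp add: inner_sum_right)
  also have "\<dots> = (\<Sum>v\<in>B. if v = w then c v else 0)"
    by (rule sum.cong) (use on assms(3) in auto)
  also have "\<dots> = c w" using assms by (simp add: sum.delta')
  finally show ?thesis .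
qed

lemma mv_sum: "(A::real^'n^'m) *v (\<Sum>v\<in>B. c v *\<^sub>R v) = (\<Sum>v\<in>B. c v *\<^sub>R (A *v v))"
  by (simp add: linear_sum[OF matrix_vector_mul_linear] matrix_vector_mult_scaleR)

lemma sqrt_exists:
  fixes R :: "real^'n^'n"
  assumes R: "pos_def_matrix R"
  shows "\<exists>S. pos_def_matrix S \<and> S ** S = R"
proof -
  have sym: "transpose R = R" using R by (simp add: pos_def_matrix_def)
  obtain B where B: "good_set R B" "finite B" "span B = UNIV" using eig_basis[OF sym] by blast
  define l where "l v = v \<bullet> (R *v v)" for v
  have Rv: "R *v v = l v *\<^sub>R v" if vB: "v \<in> B" for v
  proof -
    obtain c where c: "R *v v = c *\<^sub>R v" "norm v = 1" by (rule good_setD[OF B(1) vB])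
    then have "l v = c" unfolding l_def by (simp add: norm_eq_1)
    then show ?thesis using c by simp
  qed
  have lpos: "l v > 0" if vB: "v \<in> B" for v
  proof -
    obtain c where "norm v = 1" by (rule good_setD[OF B(1) vB])
    then have "v \<noteq> 0" by auto
    then show ?thesis using R unfolding pos_def_matrix_def l_def by blast
  qed
  define S :: "real^'n^'n" where "S = (\<chi> i j. \<Sum>v\<in>B. sqrt (l v) * (v$i * v$j))"
  have Sx: "S *v x = (\<Sum>v\<in>B. (sqrt (l v) * (v \<bullet> x)) *\<^sub>R v)" for x
    unfolding S_def
    by (simp add: vec_eq_iff matrix_vector_mult_def inner_vec_def sum_distrib_left sum_distrib_right
        sum.swap[of _ B UNIV] mult_ac)
  have SS: "S *v (S *v x) = R *v x" for x
  proof -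
    have "S *v (S *v x) = (\<Sum>v\<in>B. (sqrt (l v) * (v \<bullet> (S *v x))) *\<^sub>R v)" by (rule Sx)
    also have "\<dots> = (\<Sum>v\<in>B. (l v * (v \<bullet> x)) *\<^sub>R v)"
    proof (rule sum.cong)
      fix v assume v: "v \<in> B"
      have "v \<bullet> (S *v x) = sqrt (l v) * (v \<bullet> x)"
        unfolding Sx by (rule good_coeff[OF B(1,2) v])
      then show "(sqrt (l v) * (v \<bullet> (S *v x))) *\<^sub>R v = (l v * (v \<bullet> x)) *\<^sub>R v"
        using lpos[OF v] by (simp add: mult.assoc[symmetric])
    qed simp
    also have "\<dots> = R *v (\<Sum>v\<in>B. (v \<bullet> x) *\<^sub>R v)"
      by (simp add: mv_sum Rv mult.commute)
    also have "(\<Sum>v\<in>B. (v \<bullet> x) *\<^sub>R v) = x" using good_expand[OF B] by simp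
    finally show ?thesis .
  qed
  have "S ** S = R" using SS by (simp add: matrix_eq matrix_vector_mul_assoc)
  moreover have "transpose S = S" unfolding S_def by (simp add: transpose_def vec_eq_iff mult.commute)
  moreover have "x \<bullet> (S *v x) > 0" if "x \<noteq> 0" for x
  proof -
    have eq: "x \<bullet> (S *v x) = (\<Sum>v\<in>B. sqrt (l v) * (v \<bullet> x)^2)"
      unfolding Sx by (simp add: inner_sum_right power2_eq_square inner_commute mult.assoc)
    have "\<exists>v\<in>B. v \<bullet> x \<noteq> 0"
    proof (rule ccontr)
      assume "\<not> ?thesis"
      then have "(\<Sum>v\<in>B. (v \<bullet> x) *\<^sub>R v) = 0" by simp
      then show False using good_expand[OF B, of x] that by simp
    qed
    then obtain w where w: "w \<in> B" "w \<bullet> x \<noteq> 0" by blast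
    have "0 < sqrt (l w) * (w \<bullet> x)^2" using lpos[OF w(1)] w(2) by simp
    also have "\<dots> \<le> (\<Sum>v\<in>B. sqrt (l v) * (v \<bullet> x)^2)"
      using B(2) w(1) lpos by (intro member_le_sum) (auto intro!: mult_nonneg_nonneg simp: less_imp_le)
    finally show ?thesis using eq by simp
  qed
  ultimately show ?thesis unfolding pos_def_matrix_def by blast
qed

lemma sqrt_unique:
  fixes S1 S2 :: "real^'n^'n"
  assumes S1: "pos_def_matrix S1" and S2: "pos_def_matrix S2" and eq: "S1 ** S1 = S2 ** S2"
  shows "S1 = S2"
proof -
  define D where "D = S1 - S2"
  have sym1: "transpose S1 = S1" using S1 by (simp add: pos_def_matrix_def)
  have sym2: "transpose S2 = S2" using S2 by (simp add: pos_def_matrix_def)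
  have symD: "transpose D = D" unfolding D_def using sym1 sym2
    by (simp add: transpose_def vec_eq_iff)
  obtain B where B: "good_set D B" "finite B" "span B = UNIV" using eig_basis[OF symD] by blast
  have Dv: "D *v v = 0" if vB: "v \<in> B" for v
  proof -
    obtain c where c: "D *v v = c *\<^sub>R v" "norm v = 1" by (rule good_setD[OF B(1) vB])
    have v0: "v \<noteq> 0" using c(2) by auto
    have s1: "S1 *v v = S2 *v v + c *\<^sub>R v" using c(1) unfolding D_def
      by (simp add: matrix_vector_mult_diff_rdistrib algebra_simps)
    have "v \<bullet> (S1 *v (S1 *v v)) = v \<bullet> (S2 *v (S2 *v v))"
      using eq by (simp add: matrix_vector_mul_assoc)
    moreover have "v \<bullet> (S1 *v (S1 *v v)) = (S1 *v v) \<bullet> (S1 *v v)"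
      by (rule sym_inner[OF sym1])
    moreover have "v \<bullet> (S2 *v (S2 *v v)) = (S2 *v v) \<bullet> (S2 *v v)"
      by (rule sym_inner[OF sym2])
    ultimately have "(S1 *v v) \<bullet> (S1 *v v) = (S2 *v v) \<bullet> (S2 *v v)" by simp
    have "(S1 *v v) \<bullet> (S1 *v v) = (S1 *v v) \<bullet> (S2 *v v) + c * ((S1 *v v) \<bullet> v)"
      by (subst (2) s1) (simp add: inner_add_right)
    also have "(S1 *v v) \<bullet> (S2 *v v) = (S2 *v v) \<bullet> (S2 *v v) + c * (v \<bullet> (S2 *v v))"
      by (subst s1) (simp add: inner_add_left)
    finally have "c * (v \<bullet> (S2 *v v) + v \<bullet> (S1 *v v)) = 0"
      using \<open>(S1 *v v) \<bullet> (S1 *v v) = (S2 *v v) \<bullet> (S2 *v v)\<close>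
      by (simp add: inner_commute algebra_simps)
    moreover have "v \<bullet> (S2 *v v) + v \<bullet> (S1 *v v) > 0"
      using S1 S2 v0 unfolding pos_def_matrix_def by (simp add: add_pos_pos)
    ultimately have "c = 0" by simp
    then show ?thesis using c by simp
  qed
  have "D *v x = 0" for x
  proof -
    have "D *v x = D *v (\<Sum>v\<in>B. (v \<bullet> x) *\<^sub>R v)" using good_expand[OF B, of x] by simp
    also have "\<dots> = 0" by (simp add: mv_sum Dv)
    finally show ?thesis .
  qed
  then have "D = 0" by (simp add: matrix_eq)
  then show ?thesis unfolding D_def by simp
qed

lemma matrix_sqrt_props:
  assumes "pos_def_matrix R"
  shows "pos_def_matrix (matrix_sqrt R) \<and> matrix_sqrt R ** matrix_sqrt R = R"
proof -
  have "\<exists>!S. pos_def_matrix S \<and> S ** S = R"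
    using sqrt_exists[OF assms] sqrt_unique by metis
  then show ?thesis unfolding matrix_sqrt_def by (rule theI')
qed

lemma matrix_add_rdistrib: "((B + C) ** A) = (B ** A) + (C ** A)"
  by (vector matrix_matrix_mult_def sum.distrib[symmetric] field_simps)
lemma matrix_diff_ldistrib: "(A ** (B - C)) = (A ** B) - (A ** (C::'a::ring_1^_^_))"
  by (vector matrix_matrix_mult_def sum_subtractf[symmetric] field_simps)
lemma matrix_diff_rdistrib: "((B - C) ** A) = (B ** A) - (C ** (A::'a::ring_1^_^_))"
  by (vector matrix_matrix_mult_def sum_subtractf[symmetric] field_simps)
lemma matrix_neg_right: "A ** (- B) = - (A ** (B::'a::ring_1^_^_))"
  by (vector matrix_matrix_mult_def sum_negf[symmetric])
lemma matrix_neg_left: "(- B) ** A = - (B ** (A::'a::ring_1^_^_))"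
  by (vector matrix_matrix_mult_def sum_negf[symmetric])
lemma transpose_add: "transpose (A + B) = transpose A + transpose B"
  by (simp add: transpose_def vec_eq_iff)
lemma transpose_diff: "transpose (A - B) = transpose A - transpose (B::'a::ab_group_add^_^_)"
  by (simp add: transpose_def vec_eq_iff)

lemma diag_mult: "diag_mat a ** diag_mat b = diag_mat (a * b)"
proof -
  have "(\<Sum>k\<in>UNIV. (if i = k then a$i else 0) * (if k = j then b$k else 0)) = (if i = j then a$i * b$i else 0)"
    for i j
  proof -
    have "(\<Sum>k\<in>UNIV. (if i = k then a$i else 0) * (if k = j then b$k else 0))
        = (\<Sum>k\<in>UNIV. if k = i then a$i * (if k = j then b$k else 0) else 0)"
      by (rule sum.cong) auto
    also have "\<dots> = a$i * (if i = j then b$i else 0)" by (simp add: sum.delta)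
    finally show ?thesis by simp
  qed
  then show ?thesis by (simp add: diag_mat_def matrix_matrix_mult_def vec_eq_iff)
qed
lemma diag_add: "diag_mat a + diag_mat b = diag_mat (a + b)"
  by (simp add: diag_mat_def vec_eq_iff)
lemma diag_one: "diag_mat 1 = mat 1"
  by (simp add: diag_mat_def mat_def vec_eq_iff)
lemma diag_transpose: "transpose (diag_mat a) = diag_mat a"
  by (simp add: diag_mat_def transpose_def vec_eq_iff)
lemma diag_mv: "diag_mat a *v x = a * x"
proof -
  have "(\<Sum>k\<in>UNIV. (if i = k then a$i else 0) * x$k) = a$i * x$i" for i
  proof -
    have "(\<Sum>k\<in>UNIV. (if i = k then a$i else 0) * x$k) = (\<Sum>k\<in>UNIV. if k = i then a$i * x$k else 0)"
      by (rule sum.cong) auto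
    also have "\<dots> = a$i * x$i" by (simp add: sum.delta)
    finally show ?thesis .
  qed
  then show ?thesis by (simp add: diag_mat_def matrix_vector_mult_def vec_eq_iff)
qed


lemma invertible_inv:
  fixes A :: "real^'n^'n"
  assumes "invertible A"
  shows "A ** matrix_inv A = mat 1 \<and> matrix_inv A ** A = mat 1"
  using assms unfolding invertible_def matrix_inv_def by (rule someI_ex)

lemma matrix_inv_eqI:
  fixes A B :: "real^'n^'n"
  assumes "A ** B = mat 1"
  shows "matrix_inv A = B"
proof -
  have inv: "invertible A" using assms invertible_right_inverse by blast
  have "matrix_inv A = matrix_inv A ** (A ** B)" using assms by simp
  also have "\<dots> = B" using invertible_inv[OF inv] by (simp add: matrix_mul_assoc)
  finally show ?thesis .
qed

lemma l1: assumes s: "(s::real) > 1" and a: "1 + a = s * s" and a0: "a > 0"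
  shows "((1 / s - 1) / a) * x + (a * zz + x * (1 - s)) / (a * (1 + a)) = (zz - x) / (1 + a)"
proof -
  have s0: "s > 0" using s by simp
  have "((1 / s - 1) / a) * x + (a * zz + x * (1 - s)) / (a * (1 + a))
     = ((1 - s) * s * x + a * zz + x * (1 - s)) / (a * (s * s))"
    unfolding a using s0 a0 by (simp add: field_simps)
  also have "(1 - s) * s * x + a * zz + x * (1 - s) = a * (zz - x)"
  proof -
    have "(1 - s) * s * x + a * zz + x * (1 - s) = (1 - s * s) * x + a * zz" by (simp add: algebra_simps)
    also have "\<dots> = a * (zz - x)" using a[symmetric] by (simp add: algebra_simps)
    finally show ?thesis .
  qed
  finally show ?thesis unfolding a using s0 a0 by simp
qed
lemma l2: assumes s: "(s::real) > 1" and a: "1 + a = s * s" and a0: "a > 0"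
  shows "2 * ((1 / s - 1) / a) + ((1 / s - 1) / a)^2 * a + 1 / (1 + a) = 0"
proof -
  have s0: "s > 0" using s by simp
  have "2 * ((1 / s - 1) / a) + ((1 / s - 1) / a)^2 * a + 1 / (1 + a)
      = (2 * (1 - s) * s + (1 - s) * (1 - s) + a) / (a * (s * s))"
    unfolding a using s0 a0 by (simp add: field_simps power2_eq_square)
  also have "2 * (1 - s) * s + (1 - s) * (1 - s) + a = 0"
    using a by (simp add: algebra_simps)
  finally show ?thesis by simp
qed

lemma scal_mean:
  fixes a x zz :: real
  assumes a: "a > 0"
  shows "((1 / sqrt (1 + a) - 1) / a) * x + (a * zz + x * (1 - sqrt (1 + a))) / (a * (1 + a)) = (zz - x) / (1 + a)"
  by (rule l1) (use a in \<open>auto simp: real_sqrt_mult_self\<close>)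

lemma scal_cov:
  fixes a :: real
  assumes a: "a > 0"
  shows "2 * ((1 / sqrt (1 + a) - 1) / a) + ((1 / sqrt (1 + a) - 1) / a)^2 * a + 1 / (1 + a) = 0"
  by (rule l2) (use a in \<open>auto simp: real_sqrt_mult_self\<close>)

lemma core:
  fixes P :: "real^'x^'x" and R S T V :: "real^'z^'z" and H :: "real^'x^'z"
    and xbar :: "real^'x" and z :: "real^'z" and \<alpha> :: "real^'z"
  assumes TR: "Rih R = T" and ST: "S ** T = mat 1" and TS: "T ** S = mat 1"
    and Tsym: "transpose T = T" and SS: "S ** S = R" and Psym: "transpose P = P"
    and VV: "transpose V ** V = mat 1" and VV': "V ** transpose V = mat 1"
    and Deig: "T ** H ** P ** transpose H ** T = V ** diag_mat \<alpha> ** transpose V"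
    and apos: "\<And>i. \<alpha> $ i > 0"
  defines "K \<equiv> diag_mat (\<chi> i. 1 / (1 + \<alpha> $ i))"
  shows "matrix_inv (H ** P ** transpose H + R) = T ** V ** K ** transpose V ** T"
    and "upd_Phi P R H V \<alpha> *v xbar + upd_E P R H V *v upd_c R H V \<alpha> xbar z
          = xbar + (P ** transpose H ** matrix_inv (H ** P ** transpose H + R)) *v (z - H *v xbar)"
    and "upd_Phi P R H V \<alpha> ** P ** transpose (upd_Phi P R H V \<alpha>)
          = P - P ** transpose H ** matrix_inv (H ** P ** transpose H + R) ** H ** P"
proof -
  have XST: "X ** S ** T = X" for X :: "real^'z^'n"
    by (metis ST matrix_mul_assoc matrix_mul_rid)
  have XTS: "X ** T ** S = X" for X :: "real^'z^'n"
    by (metis TS matrix_mul_assoc matrix_mul_rid)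
  have XVV: "X ** transpose V ** V = X" for X :: "real^'z^'n"
    by (metis VV matrix_mul_assoc matrix_mul_rid)
  have XVV': "X ** V ** transpose V = X" for X :: "real^'z^'n"
    by (metis VV' matrix_mul_assoc matrix_mul_rid)
  have Xdd: "X ** diag_mat a ** diag_mat b = X ** diag_mat (a * b)" for X :: "real^'z^'n" and a b
    by (metis diag_mult matrix_mul_assoc)
  define L where "L = diag_mat \<alpha>"
  have ap1: "1 + \<alpha> $ i \<noteq> 0" for i using apos[of i] by linarith
  define G where "G = H ** P ** transpose H"
  have LK: "(L + mat 1) ** K = mat 1"
    unfolding L_def K_def diag_one[symmetric] diag_add diag_mult
    using ap1 by (intro arg_cong[where f=diag_mat]) (auto simp: vec_eq_iff field_simps)
  have XLK: "X ** (L + mat 1) ** K = X" for X :: "real^'z^'n"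
    by (metis LK matrix_mul_assoc matrix_mul_rid)
  have GR: "G + R = S ** V ** (L + mat 1) ** transpose V ** S"
  proof -
    have "G = S ** (T ** G ** T) ** S"
      by (simp add: matrix_mul_assoc XTS ST)
    also have "T ** G ** T = V ** L ** transpose V" using Deig unfolding G_def L_def
      by (simp add: matrix_mul_assoc)
    finally have "G = S ** V ** L ** transpose V ** S" by (simp add: matrix_mul_assoc)
    moreover have "R = S ** V ** mat 1 ** transpose V ** S"
      using SS by (simp add: XVV' ST)
    ultimately show ?thesis
      by (simp add: matrix_add_ldistrib matrix_add_rdistrib matrix_mul_assoc)
  qed
  have inv: "matrix_inv (G + R) = T ** V ** K ** transpose V ** T"
  proof (rule matrix_inv_eqI)
    show "(G + R) ** (T ** V ** K ** transpose V ** T) = mat 1"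
      unfolding GR by (simp add: matrix_mul_assoc XST XVV XLK XVV' ST)
  qed
  then show "matrix_inv (H ** P ** transpose H + R) = T ** V ** K ** transpose V ** T"
    unfolding G_def .
  show "upd_Phi P R H V \<alpha> *v xbar + upd_E P R H V *v upd_c R H V \<alpha> xbar z
          = xbar + (P ** transpose H ** matrix_inv (H ** P ** transpose H + R)) *v (z - H *v xbar)"
  proof -
    define Om where "Om = upd_Omega \<alpha>"
    define E where "E = upd_E P R H V"
    define Ft where "Ft = upd_Ft R H V"
    have Edef: "E = P ** transpose H ** T ** V" unfolding E_def upd_E_def TR ..
    have Ftdef: "Ft = transpose V ** T ** H" unfolding Ft_def upd_Ft_def TR ..
    define zt where "zt = transpose V *v (T *v z)"
    define xt where "xt = Ft *v xbar"
    have c: "upd_c R H V \<alpha> xbar z = (\<chi> i. (\<alpha> $ i * zt $ i + xt $ i * (1 - sqrt (1 + \<alpha> $ i))) / (\<alpha> $ i * (1 + \<alpha> $ i)))"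
      unfolding upd_c_def zt_def xt_def Ft_def TR Let_def ..
    have Phi: "upd_Phi P R H V \<alpha> *v xbar = xbar + E *v (Om *v xt)"
      unfolding upd_Phi_def E_def Om_def xt_def Ft_def
      by (simp add: matrix_vector_mult_add_rdistrib matrix_vector_mul_assoc[symmetric])
    have comb: "Om *v xt + upd_c R H V \<alpha> xbar z = K *v (zt - xt)"
      unfolding c Om_def upd_Omega_def K_def diag_mv
      using scal_mean[OF apos] by (simp add: vec_eq_iff)
    have zx: "zt - xt = (transpose V ** T) *v (z - H *v xbar)"
      unfolding zt_def xt_def Ftdef
      by (simp add: matrix_vector_mult_diff_distrib matrix_vector_mul_assoc)
    have "upd_Phi P R H V \<alpha> *v xbar + E *v upd_c R H V \<alpha> xbar z
        = xbar + E *v (Om *v xt + upd_c R H V \<alpha> xbar z)"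
      unfolding Phi by (simp add: matrix_vector_right_distrib)
    also have "\<dots> = xbar + (E ** K ** (transpose V ** T)) *v (z - H *v xbar)"
      unfolding comb zx by (simp add: matrix_vector_mul_assoc matrix_mul_assoc)
    also have "E ** K ** (transpose V ** T) = P ** transpose H ** matrix_inv (H ** P ** transpose H + R)"
      unfolding inv[unfolded G_def] Edef by (simp add: matrix_mul_assoc)
    finally show ?thesis unfolding E_def .
  qed
  show "upd_Phi P R H V \<alpha> ** P ** transpose (upd_Phi P R H V \<alpha>)
          = P - P ** transpose H ** matrix_inv (H ** P ** transpose H + R) ** H ** P"
  proof -
    define Om where "Om = upd_Omega \<alpha>"
    define W where "W = transpose H ** T ** V"
    have Wt: "transpose W = transpose V ** T ** H"
      unfolding W_def by (simp add: matrix_transpose_mul Tsym matrix_mul_assoc)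
    have Omt: "transpose Om = Om" unfolding Om_def upd_Omega_def by (rule diag_transpose)
    have Phi: "upd_Phi P R H V \<alpha> = mat 1 + P ** W ** Om ** transpose W"
      unfolding upd_Phi_def upd_E_def upd_Ft_def TR Om_def Wt by (simp add: W_def matrix_mul_assoc)
    have PhiT: "transpose (upd_Phi P R H V \<alpha>) = mat 1 + W ** Om ** transpose W ** P"
      unfolding Phi by (simp add: transpose_add matrix_transpose_mul Omt Psym matrix_mul_assoc)
    have WPW: "transpose W ** P ** W = L"
    proof -
      have "transpose W ** P ** W = transpose V ** (T ** H ** P ** transpose H ** T) ** V"
        unfolding Wt by (simp add: W_def matrix_mul_assoc)
      also have "\<dots> = L" unfolding Deig L_def by (simp add: matrix_mul_assoc XVV XVV' VV VV')
      finally show ?thesis .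
    qed
    have XWPW: "X ** transpose W ** P ** W = X ** L" for X :: "real^'z^'n"
      by (metis WPW matrix_mul_assoc)
    have diagc: "Om + Om + Om ** L ** Om = 0 - K"
    proof -
      have "Om + Om + Om ** L ** Om = diag_mat (\<chi> i. 2 * ((1 / sqrt (1 + \<alpha> $ i) - 1) / \<alpha> $ i) + ((1 / sqrt (1 + \<alpha> $ i) - 1) / \<alpha> $ i)^2 * \<alpha> $ i)"
        unfolding Om_def upd_Omega_def L_def diag_mult diag_add
        by (intro arg_cong[where f=diag_mat]) (auto simp: vec_eq_iff power2_eq_square algebra_simps)
      also have "\<dots> = 0 - K"
        unfolding K_def using scal_cov[OF apos]
        by (simp add: diag_mat_def vec_eq_iff eq_neg_iff_add_eq_0)
      finally show ?thesis .
    qed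
    have "upd_Phi P R H V \<alpha> ** P ** transpose (upd_Phi P R H V \<alpha>)
        = P + P ** W ** (Om + Om + Om ** L ** Om) ** transpose W ** P"
      unfolding PhiT unfolding Phi
      by (simp only: matrix_add_ldistrib matrix_add_rdistrib matrix_mul_assoc XWPW add.assoc
          matrix_mul_lid matrix_mul_rid)
    also have "\<dots> = P - P ** W ** K ** transpose W ** P"
      unfolding diagc by (simp add: matrix_diff_ldistrib matrix_diff_rdistrib matrix_neg_left matrix_neg_right)
    also have "P ** W ** K ** transpose W ** P = P ** transpose H ** matrix_inv (H ** P ** transpose H + R) ** H ** P"
      unfolding inv[unfolded G_def] Wt by (simp add: W_def matrix_mul_assoc)
    finally show ?thesis .
  qed
qed

lemma integral_nth:
  fixes f :: "'s \<Rightarrow> real^'n"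
  assumes "integrable M f"
  shows "integral\<^sup>L M (\<lambda>w. f w $ i) = integral\<^sup>L M f $ i"
proof -
  have "integral\<^sup>L M (\<lambda>w. f w \<bullet> axis i 1) = integral\<^sup>L M f \<bullet> axis i 1"
    using assms by (rule integral_inner_left)
  then show ?thesis by (simp add: inner_axis)
qed

lemma integrable_nth:
  fixes f :: "'s \<Rightarrow> real^'n"
  assumes "integrable M f"
  shows "integrable M (\<lambda>w. f w $ i)"
proof -
  have "integrable M (\<lambda>w. f w \<bullet> axis i 1)" using assms by simp
  then show ?thesis by (simp add: inner_axis)
qed

lemma integrable_prod_sq:
  fixes f g :: "'s \<Rightarrow> real"
  assumes f: "f \<in> borel_measurable M" and g: "g \<in> borel_measurable M"
    and f2: "integrable M (\<lambda>w. (f w)^2)" and g2: "integrable M (\<lambda>w. (g w)^2)"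
  shows "integrable M (\<lambda>w. f w * g w)"
proof (rule Bochner_Integration.integrable_bound[where f="\<lambda>w. (f w)^2 + (g w)^2"])
  show "integrable M (\<lambda>w. (f w)^2 + (g w)^2)" using f2 g2 by simp
  show "(\<lambda>w. f w * g w) \<in> borel_measurable M" using f g by measurable
  show "AE x in M. norm (f x * g x) \<le> norm ((f x)^2 + (g x)^2)"
  proof (rule AE_I2)
    fix x
    have "0 \<le> (\<bar>f x\<bar> - \<bar>g x\<bar>)^2" by simp
    then have "2 * (\<bar>f x\<bar> * \<bar>g x\<bar>) \<le> (f x)^2 + (g x)^2"
      by (simp add: power2_eq_square algebra_simps)
    moreover have "0 \<le> \<bar>f x\<bar> * \<bar>g x\<bar>" by simp
    ultimately have "\<bar>f x\<bar> * \<bar>g x\<bar> \<le> (f x)^2 + (g x)^2" by linarith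
    then have "\<bar>f x * g x\<bar> \<le> (f x)^2 + (g x)^2" by (simp add: abs_mult)
    then show "norm (f x * g x) \<le> norm ((f x)^2 + (g x)^2)" by simp
  qed
qed

lemma prob_part:
  fixes M :: "'s measure" and x0 :: "'s \<Rightarrow> real^'x" and A :: "real^'x^'y" and b :: "real^'y"
  assumes M: "prob_space M"
    and x0_int: "integrable M x0"
    and x0_sq: "\<And>i. integrable M (\<lambda>w. (x0 w $ i)^2)"
    and mean: "mean_vec M x0 = xbar"
    and cov: "cov_mat M x0 = P"
  shows "mean_vec M (\<lambda>w. A *v x0 w + b) = A *v xbar + b"
    and "cov_mat M (\<lambda>w. A *v x0 w + b) = A ** P ** transpose A"
proof -
  interpret prob_space M by (rule M)
  have int1: "integrable M (\<lambda>w. A *v x0 w)"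
    using x0_int by (rule integrable_bounded_linear[OF matrix_vector_mul_bounded_linear])
  have m1: "mean_vec M (\<lambda>w. A *v x0 w + b) = A *v xbar + b"
    unfolding mean_vec_def
    using int1 integral_bounded_linear[OF matrix_vector_mul_bounded_linear x0_int, of A] mean prob_space
    by (simp add: mean_vec_def)
  then show "mean_vec M (\<lambda>w. A *v x0 w + b) = A *v xbar + b" .
  define y where "y w = x0 w - xbar" for w
  have meas: "(\<lambda>w. x0 w $ k) \<in> borel_measurable M" for k
    using integrable_nth[OF x0_int] by (rule borel_measurable_integrable)
  have yint: "integrable M (\<lambda>w. y w $ k * y w $ l)" for k l
  proof -
    have "integrable M (\<lambda>w. (x0 w $ k - xbar $ k) * (x0 w $ l - xbar $ l))"
    proof (rule integrable_prod_sq)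
      show "(\<lambda>w. x0 w $ k - xbar $ k) \<in> borel_measurable M" using meas by measurable
      show "(\<lambda>w. x0 w $ l - xbar $ l) \<in> borel_measurable M" using meas by measurable
      have ik: "integrable M (\<lambda>w. x0 w $ k)" using integrable_nth[OF x0_int] .
      show "integrable M (\<lambda>w. (x0 w $ k - xbar $ k)^2)"
        using x0_sq[of k] ik by (simp add: power2_diff)
      have il: "integrable M (\<lambda>w. x0 w $ l)" using integrable_nth[OF x0_int] .
      show "integrable M (\<lambda>w. (x0 w $ l - xbar $ l)^2)"
        using x0_sq[of l] il by (simp add: power2_diff)
    qed
    then show ?thesis unfolding y_def by simp
  qed
  have Pkl: "P $ k $ l = integral\<^sup>L M (\<lambda>w. y w $ k * y w $ l)" for k l
    using cov mean unfolding cov_mat_def y_def by (auto simp: vec_eq_iff)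
  show "cov_mat M (\<lambda>w. A *v x0 w + b) = A ** P ** transpose A"
  proof -
    have "cov_mat M (\<lambda>w. A *v x0 w + b) $ i $ j = (A ** P ** transpose A) $ i $ j" for i j
    proof -
      have d: "(A *v x0 w + b) $ i - mean_vec M (\<lambda>w. A *v x0 w + b) $ i = (\<Sum>k\<in>UNIV. A$i$k * y w $ k)" for w i
        unfolding m1 y_def by (simp add: matrix_vector_mult_def sum_subtractf[symmetric] right_diff_distrib)
      have "cov_mat M (\<lambda>w. A *v x0 w + b) $ i $ j
          = integral\<^sup>L M (\<lambda>w. (\<Sum>k\<in>UNIV. A$i$k * y w $ k) * (\<Sum>l\<in>UNIV. A$j$l * y w $ l))"
        unfolding cov_mat_def d by simp
      also have "\<dots> = integral\<^sup>L M (\<lambda>w. \<Sum>k\<in>UNIV. \<Sum>l\<in>UNIV. A$i$k * A$j$l * (y w $ k * y w $ l))"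
        by (simp add: sum_product mult_ac)
      also have "\<dots> = (\<Sum>k\<in>UNIV. \<Sum>l\<in>UNIV. A$i$k * A$j$l * P $ k $ l)"
        using yint by (simp add: Pkl)
      also have "\<dots> = (A ** P ** transpose A) $ i $ j"
        by (simp add: matrix_matrix_mult_def transpose_def sum_distrib_left sum_distrib_right mult_ac)
           (rule sum.swap)
      finally show ?thesis .
    qed
    then show ?thesis by (simp add: vec_eq_iff)
  qed
qed

theorem theorem1:
  fixes P :: "real^'x^'x" and R :: "real^'z^'z" and H :: "real^'x^'z"
    and xbar :: "real^'x" and z :: "real^'z"
    and M :: "'s measure" and x0 :: "'s \<Rightarrow> real^'x"
    and V :: "real^'z^'z" and \<alpha> :: "real^'z"
  assumes P_spd: "pos_def_matrix P"
    and R_spd: "pos_def_matrix R"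
    and H_rank: "rank H = CARD('z)"
    and M_prob: "prob_space M"
    and x0_int: "integrable M x0"
    and x0_sq_int: "\<And>i. integrable M (\<lambda>w. (x0 w $ i)^2)"
    and x0_mean: "mean_vec M x0 = xbar"
    and x0_cov: "cov_mat M x0 = P"
    and V_orth: "orthogonal_matrix V"
    and D_eig: "Rih R ** H ** P ** transpose H ** Rih R
                  = V ** diag_mat \<alpha> ** transpose V"
    and \<alpha>_pos: "\<And>i. \<alpha> $ i > 0"
  defines "\<Phi> \<equiv> upd_Phi P R H V \<alpha>"
    and "x1 \<equiv> (\<lambda>w. upd_Phi P R H V \<alpha> *v x0 w + upd_E P R H V *v upd_c R H V \<alpha> xbar z)"
  shows "mean_vec M x1 = xbar + (P ** transpose H ** matrix_inv (H ** P ** transpose H + R)) *v (z - H *v xbar)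
         \<and> cov_mat M x1 = \<Phi> ** P ** transpose \<Phi>
         \<and> \<Phi> ** P ** transpose \<Phi> = P - P ** transpose H ** matrix_inv (H ** P ** transpose H + R) ** H ** P"
proof -
  define S where "S = matrix_sqrt R"
  define T where "T = Rih R"
  have Sp: "pos_def_matrix S" and SS: "S ** S = R"
    using matrix_sqrt_props[OF R_spd] unfolding S_def by auto
  have Ssym: "transpose S = S" using Sp by (simp add: pos_def_matrix_def)
  have injS: "inj ((*v) S)"
  proof (rule injI)
    fix x y assume eq: "S *v x = S *v y"
    have "S *v (x - y) = 0" using eq by (simp add: matrix_vector_mult_diff_distrib)
    then have "\<not> (x - y \<noteq> 0)" using Sp unfolding pos_def_matrix_def
      by (metis inner_zero_right less_irrefl)
    then show "x = y" by simp
  qed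
  have invS: "invertible S"
    using injS matrix_left_invertible_injective invertible_left_inverse by blast
  have TS_def: "T = matrix_inv S" unfolding T_def Rih_def S_def ..
  have ST: "S ** T = mat 1" and TS: "T ** S = mat 1"
    using invertible_inv[OF invS] unfolding TS_def by auto
  have Tsym: "transpose T = T"
  proof -
    have "transpose T ** S = mat 1"
      using arg_cong[OF ST, of transpose] by (simp add: matrix_transpose_mul Ssym)
    then have "transpose T = transpose T ** (S ** T)" using ST by simp
    also have "\<dots> = T" using \<open>transpose T ** S = mat 1\<close> by (simp add: matrix_mul_assoc)
    finally show ?thesis .
  qed
  have Psym: "transpose P = P" using P_spd by (simp add: pos_def_matrix_def)
  have VV: "transpose V ** V = mat 1" using V_orth by (simp add: orthogonal_matrix)
  have VV': "V ** transpose V = mat 1" using VV matrix_left_right_inverse by blast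
  have Deig: "T ** H ** P ** transpose H ** T = V ** diag_mat \<alpha> ** transpose V"
    using D_eig unfolding T_def .
  note c = core[OF T_def[symmetric] ST TS Tsym SS Psym VV VV' Deig \<alpha>_pos]
  have pp1: "mean_vec M x1 = upd_Phi P R H V \<alpha> *v xbar + upd_E P R H V *v upd_c R H V \<alpha> xbar z"
    unfolding x1_def by (rule prob_part(1)[OF M_prob x0_int x0_sq_int x0_mean x0_cov])
  have pp2: "cov_mat M x1 = \<Phi> ** P ** transpose \<Phi>"
    unfolding x1_def \<Phi>_def by (rule prob_part(2)[OF M_prob x0_int x0_sq_int x0_mean x0_cov])
  show ?thesis using pp1 pp2 c(2) c(3) unfolding \<Phi>_def by simp
qed

end
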